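(* Let $(\alpha,\beta)\in\mathcal{A}(K,L,T)$, let $p$ (resp. $q$) be the vector of entries of $\alpha$ (resp. $\beta$) sorted increasingly, and let $a=\min\operatorname{Set}(\alpha)$, $A=\max\operatorname{Set}(\alpha)$, $b=\min\operatorname{Set}(\beta)$, $B=\max\operatorname{Set}(\beta)$. (1) If $1\le i<K+T$ and $p_i+B<(p_{i+1}-1)+b$, then $(\alpha',\beta)\in\mathcal{A}(K,L,T)$ and $\operatorname{N}(\alpha',\beta)=\operatorname{N}(\alpha,\beta)$, where $\alpha'_j=\alpha_j$ if $\alpha_j\le p_i$ and $\alpha'_j=\alpha_j-1$ otherwise (the splitting of $\alpha'$ into prefix of length $K$ and suffix of length $T$ being the same as for $\alpha$). (2) If $1\le i<L+T$ and $q_i+A<(q_{i+1}-1)+a$, then $(\alpha,\beta')\in\mathcal{A}(K,L,T)$ and $\operatorname{N}(\alpha,\beta')=\operatorname{N}(\alpha,\beta)$, where $\beta'_j=\beta_j$ if $\beta_j\le q_i$ and $\beta'_j=\beta_j-1$ otherwise.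
   Context: A degree table with parameters $K,L,T$ is a tuple $(\alpha_{\mathrm p},\alpha_{\mathrm s},\beta_{\mathrm p},\beta_{\mathrm s})$ of nonnegative integer vectors of lengths $K,T,L,T$ such that, with $\alpha=(\alpha_{\mathrm p}\mid\alpha_{\mathrm s})$ and $\beta=(\beta_{\mathrm p}\mid\beta_{\mathrm s})$: (i) entries of $\alpha$ are distinct; (ii) entries of $\beta$ are distinct; (iii) for every integer $n\in\operatorname{Set}(\alpha_{\mathrm p})+\operatorname{Set}(\beta_{\mathrm p})$ there is a unique $i\in\operatorname{Set}(\alpha)$ and unique $j\in\operatorname{Set}(\beta)$ with $n=i+j$. $\operatorname{Set}(v)$ is the set of entries of $v$, $A+B=\{a+b\}$, $\mathcal{A}(K,L,T)$ is the set of degree tables and $\operatorname{N}(\alpha,\beta)=|\operatorname{Set}(\alpha)+\operatorname{Set}(\beta)|$. *)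

theory Defs
  imports Main
begin

definition sumset :: "nat set \<Rightarrow> nat set \<Rightarrow> nat set" where
  "sumset A B = {x + y | x y. x \<in> A \<and> y \<in> B}"

text \<open>Degree tables: vectors are lists of naturals; alpha = ap @ as, beta = bp @ bs.\<close>
definition degree_table ::
  "nat \<Rightarrow> nat \<Rightarrow> nat \<Rightarrow> nat list \<Rightarrow> nat list \<Rightarrow> nat list \<Rightarrow> nat list \<Rightarrow> bool" where
  "degree_table K L T ap as bp bs \<longleftrightarrow>
     length ap = K \<and> length as = T \<and> length bp = L \<and> length bs = T \<and>
     distinct (ap @ as) \<and> distinct (bp @ bs) \<and>
     (\<forall>n \<in> sumset (set ap) (set bp).
        \<exists>!(i, j). i \<in> set (ap @ as) \<and> j \<in> set (bp @ bs) \<and> n = i + j)"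

definition N_deg :: "nat list \<Rightarrow> nat list \<Rightarrow> nat" where
  "N_deg \<alpha> \<beta> = card (sumset (set \<alpha>) (set \<beta>))"

definition shift_down :: "nat \<Rightarrow> nat list \<Rightarrow> nat list" where
  "shift_down c v = map (\<lambda>x. if x \<le> c then x else x - 1) v"

end

theory Submission
  imports Defs
begin

lemma sumset_comm: "sumset A B = sumset B A"
  unfolding sumset_def by (metis (no_types, lifting) add.commute)

lemma ex1_pair_uniq:
  assumes "\<exists>!(i, j). P i j" "P x y" "P x' y'"
  shows "x' = x \<and> y' = y"
proof -
  obtain z where u: "\<And>z'. (case z' of (i, j) \<Rightarrow> P i j) \<Longrightarrow> z' = z"
    using assms(1) by (rule ex1E) blast
  have "(x, y) = z" "(x', y') = z" using u assms(2,3) by simp_all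
  then show ?thesis by (cases z) auto
qed

lemma table_swap:
  assumes "degree_table K L T ap as bp bs"
  shows "degree_table L K T bp bs ap as"
proof -
  have u: "\<forall>n \<in> sumset (set ap) (set bp).
        \<exists>!(i, j). i \<in> set (ap @ as) \<and> j \<in> set (bp @ bs) \<and> n = i + j"
    using assms unfolding degree_table_def by blast
  have "\<forall>n \<in> sumset (set bp) (set ap).
        \<exists>!(i, j). i \<in> set (bp @ bs) \<and> j \<in> set (ap @ as) \<and> n = i + j"
  proof
    fix n assume "n \<in> sumset (set bp) (set ap)"
    then have "n \<in> sumset (set ap) (set bp)" using sumset_comm by blast
    then have ex: "\<exists>!(i, j). i \<in> set (ap @ as) \<and> j \<in> set (bp @ bs) \<and> n = i + j" using u by blast
    from \<open>n \<in> sumset (set ap) (set bp)\<close> obtain x y where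
      xy: "x \<in> set (ap @ as)" "y \<in> set (bp @ bs)" "n = x + y"
      unfolding sumset_def by auto
    have un: "\<And>x' y'. x' \<in> set (ap @ as) \<Longrightarrow> y' \<in> set (bp @ bs) \<Longrightarrow> n = x' + y' \<Longrightarrow> x' = x \<and> y' = y"
    proof -
      fix x' y' assume "x' \<in> set (ap @ as)" "y' \<in> set (bp @ bs)" "n = x' + y'"
      then show "x' = x \<and> y' = y"
        using ex1_pair_uniq[OF ex, of x y x' y'] xy by blast
    qed
    show "\<exists>!(i, j). i \<in> set (bp @ bs) \<and> j \<in> set (ap @ as) \<and> n = i + j"
    proof (rule ex1I[of _ "(y, x)"])
      show "case (y, x) of (i, j) \<Rightarrow> i \<in> set (bp @ bs) \<and> j \<in> set (ap @ as) \<and> n = i + j"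
        using xy by auto
    next
      fix z assume "case z of (i, j) \<Rightarrow> i \<in> set (bp @ bs) \<and> j \<in> set (ap @ as) \<and> n = i + j"
      then obtain a b where ab: "z = (a, b)" "a \<in> set (bp @ bs)" "b \<in> set (ap @ as)" "n = a + b"
        by (cases z) auto
      have "n = b + a" using ab(4) by simp
      then have "b = x \<and> a = y" using un[OF ab(3) ab(2)] by blast
      then show "z = (y, x)" using ab(1) by simp
    qed
  qed
  then show ?thesis using assms unfolding degree_table_def by blast
qed

lemma set_shift: "set (shift_down c v) = (\<lambda>x. if x \<le> c then x else x - 1) ` set v"
  unfolding shift_down_def by simp

lemma core:
  fixes c :: nat
  assumes tab: "degree_table K L T ap as bp bs"
    and neb: "bp @ bs \<noteq> []"
    and sep: "\<forall>x\<in>set (ap@as). x \<le> c \<or> (\<forall>y\<in>set (bp@bs). \<forall>y'\<in>set (bp@bs). c + y' + 1 < x + y)"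
  shows "degree_table K L T (shift_down c ap) (shift_down c as) bp bs \<and>
         N_deg (shift_down c (ap@as)) (bp@bs) = N_deg (ap@as) (bp@bs)"
proof -
  define f where "f = (\<lambda>x::nat. if x \<le> c then x else x - 1)"
  define \<alpha> where "\<alpha> = set (ap @ as)"
  define \<beta> where "\<beta> = set (bp @ bs)"
  have sep': "\<And>x. x \<in> \<alpha> \<Longrightarrow> \<not> x \<le> c \<Longrightarrow> y \<in> \<beta> \<Longrightarrow> y' \<in> \<beta> \<Longrightarrow> c + y' + 1 < x + y" for y y'
    using sep unfolding \<alpha>_def \<beta>_def by blast
  obtain y0 where y0: "y0 \<in> \<beta>" using neb unfolding \<beta>_def by (cases "bp @ bs") auto
  have high: "\<And>x. x \<in> \<alpha> \<Longrightarrow> \<not> x \<le> c \<Longrightarrow> c + 2 \<le> x"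
    using sep'[OF _ _ y0 y0] by fastforce
  have gap: "\<And>x x' y y'. x \<in> \<alpha> \<Longrightarrow> x \<le> c \<Longrightarrow> x' \<in> \<alpha> \<Longrightarrow> \<not> x' \<le> c \<Longrightarrow> y \<in> \<beta> \<Longrightarrow> y' \<in> \<beta>
      \<Longrightarrow> x + y + 1 < x' + y'"
    using sep' by fastforce
  have injf: "inj_on f \<alpha>"
  proof (rule inj_onI)
    fix x y assume "x \<in> \<alpha>" "y \<in> \<alpha>" "f x = f y"
    then show "x = y" using high[of x] high[of y] unfolding f_def by (auto split: if_splits)
  qed
  have dist: "distinct (ap @ as)" "distinct (bp @ bs)" using tab unfolding degree_table_def by auto
  have u: "\<forall>n \<in> sumset (set ap) (set bp).
        \<exists>!(i, j). i \<in> \<alpha> \<and> j \<in> \<beta> \<and> n = i + j"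
    using tab unfolding degree_table_def \<alpha>_def \<beta>_def by blast
  have shd: "shift_down c v = map f v" for v unfolding shift_down_def f_def by simp
  have sa: "set (shift_down c ap @ shift_down c as) = f ` \<alpha>"
    unfolding \<alpha>_def shd by auto
  have key: "\<And>x y x' y'. x \<in> \<alpha> \<Longrightarrow> y \<in> \<beta> \<Longrightarrow> x' \<in> \<alpha> \<Longrightarrow> y' \<in> \<beta> \<Longrightarrow> f x + y = f x' + y'
      \<Longrightarrow> x + y = x' + y'"
  proof -
    fix x y x' y' assume h: "x \<in> \<alpha>" "y \<in> \<beta>" "x' \<in> \<alpha>" "y' \<in> \<beta>" "f x + y = f x' + y'"
    show "x + y = x' + y'"
    proof (cases "x \<le> c"; cases "x' \<le> c")
      assume "x \<le> c" "x' \<le> c" then show ?thesis using h by (simp add: f_def)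
    next
      assume a: "x \<le> c" "\<not> x' \<le> c"
      then have "x + y + 1 < x' + y'" using gap h by blast
      moreover have "c + 2 \<le> x'" using high h a by blast
      ultimately show ?thesis using h a by (simp add: f_def)
    next
      assume a: "\<not> x \<le> c" "x' \<le> c"
      then have "x' + y' + 1 < x + y" using gap h by blast
      moreover have "c + 2 \<le> x" using high h a by blast
      ultimately show ?thesis using h a by (simp add: f_def)
    next
      assume a: "\<not> x \<le> c" "\<not> x' \<le> c"
      moreover have "c + 2 \<le> x" "c + 2 \<le> x'" using high h a by blast+
      ultimately show ?thesis using h by (simp add: f_def)
    qed
  qed
  have part1: "degree_table K L T (shift_down c ap) (shift_down c as) bp bs"
    unfolding degree_table_def
  proof (intro conjI)
    show "length (shift_down c ap) = K" "length (shift_down c as) = T" "length bp = L" "length bs = T"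
      using tab unfolding degree_table_def shift_down_def by auto
    show "distinct (shift_down c ap @ shift_down c as)"
    proof -
      have "distinct (map f (ap @ as))" using dist(1) injf unfolding \<alpha>_def by (simp only: distinct_map)
      then show ?thesis unfolding shd map_append[symmetric] .
    qed
    show "distinct (bp @ bs)" using dist by simp
    show "\<forall>n \<in> sumset (set (shift_down c ap)) (set bp).
        \<exists>!(i, j). i \<in> set (shift_down c ap @ shift_down c as) \<and> j \<in> set (bp @ bs) \<and> n = i + j"
    proof
      fix n assume "n \<in> sumset (set (shift_down c ap)) (set bp)"
      then obtain x y where xy: "x \<in> set ap" "y \<in> set bp" "n = f x + y"
        unfolding sumset_def shd by auto
      have xa: "x \<in> \<alpha>" "y \<in> \<beta>" using xy unfolding \<alpha>_def \<beta>_def by auto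
      have "x + y \<in> sumset (set ap) (set bp)" using xy unfolding sumset_def by auto
      then have "\<exists>!(i, j). i \<in> \<alpha> \<and> j \<in> \<beta> \<and> x + y = i + j" using u by blast
      then have un: "\<And>x' y'. x' \<in> \<alpha> \<Longrightarrow> y' \<in> \<beta> \<Longrightarrow> x + y = x' + y' \<Longrightarrow> x' = x \<and> y' = y"
        using ex1_pair_uniq xa by blast
      show "\<exists>!(i, j). i \<in> set (shift_down c ap @ shift_down c as) \<and> j \<in> set (bp @ bs) \<and> n = i + j"
        unfolding sa
      proof (rule ex1I[of _ "(f x, y)"])
        show "case (f x, y) of (i, j) \<Rightarrow> i \<in> f ` \<alpha> \<and> j \<in> set (bp @ bs) \<and> n = i + j"
          using xy xa \<beta>_def by auto
      next
        fix z assume "case z of (i, j) \<Rightarrow> i \<in> f ` \<alpha> \<and> j \<in> set (bp @ bs) \<and> n = i + j"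
        then obtain x' y' where z: "z = (f x', y')" "x' \<in> \<alpha>" "y' \<in> \<beta>" "n = f x' + y'"
          unfolding \<beta>_def by (cases z) auto
        then have "x + y = x' + y'" using key[OF xa z(2,3)] xy(3) by simp
        then have "x' = x \<and> y' = y" using un z(2,3) by blast
        then show "z = (f x, y)" using z(1) by simp
      qed
    qed
  qed
  define h where "h = (\<lambda>s. if (\<exists>x\<in>\<alpha>. \<exists>y\<in>\<beta>. x \<le> c \<and> s = x + y) then s else s - 1)"
  have fh: "\<And>x y. x \<in> \<alpha> \<Longrightarrow> y \<in> \<beta> \<Longrightarrow> f x + y = h (x + y)"
  proof -
    fix x y assume xy: "x \<in> \<alpha>" "y \<in> \<beta>"
    show "f x + y = h (x + y)"
    proof (cases "x \<le> c")
      case True then show ?thesis unfolding h_def f_def using xy by auto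
    next
      case False
      have "c + 2 \<le> x" using high xy False by blast
      moreover have "\<not> (\<exists>x'\<in>\<alpha>. \<exists>y'\<in>\<beta>. x' \<le> c \<and> x + y = x' + y')"
        using gap[OF _ _ xy(1) False _ xy(2)] by fastforce
      ultimately show ?thesis unfolding h_def f_def using False by auto
    qed
  qed
  have eq: "sumset (f ` \<alpha>) \<beta> = h ` sumset \<alpha> \<beta>"
  proof
    show "sumset (f ` \<alpha>) \<beta> \<subseteq> h ` sumset \<alpha> \<beta>"
    proof
      fix n assume "n \<in> sumset (f ` \<alpha>) \<beta>"
      then obtain x y where xy: "x \<in> \<alpha>" "y \<in> \<beta>" "n = f x + y" unfolding sumset_def by auto
      have "x + y \<in> sumset \<alpha> \<beta>" using xy unfolding sumset_def by auto
      moreover have "n = h (x + y)" using fh[OF xy(1,2)] xy(3) by simp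
      ultimately show "n \<in> h ` sumset \<alpha> \<beta>" by blast
    qed
    show "h ` sumset \<alpha> \<beta> \<subseteq> sumset (f ` \<alpha>) \<beta>"
    proof
      fix n assume "n \<in> h ` sumset \<alpha> \<beta>"
      then obtain x y where xy: "x \<in> \<alpha>" "y \<in> \<beta>" "n = h (x + y)" unfolding sumset_def by auto
      have "n = f x + y" using fh[OF xy(1,2)] xy(3) by simp
      then show "n \<in> sumset (f ` \<alpha>) \<beta>" using xy unfolding sumset_def by blast
    qed
  qed
  have injh: "inj_on h (sumset \<alpha> \<beta>)"
  proof (rule inj_onI)
    fix s s' assume s: "s \<in> sumset \<alpha> \<beta>" "s' \<in> sumset \<alpha> \<beta>" "h s = h s'"
    obtain x y where xy: "x \<in> \<alpha>" "y \<in> \<beta>" "s = x + y" using s unfolding sumset_def by auto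
    obtain x' y' where xy': "x' \<in> \<alpha>" "y' \<in> \<beta>" "s' = x' + y'" using s unfolding sumset_def by auto
    have "f x + y = f x' + y'" using s(3) fh[OF xy(1,2)] fh[OF xy'(1,2)] xy(3) xy'(3) by simp
    then show "s = s'" using key[OF xy(1,2) xy'(1,2)] xy(3) xy'(3) by simp
  qed
  have "N_deg (shift_down c (ap@as)) (bp@bs) = card (sumset (f ` \<alpha>) \<beta>)"
    unfolding N_deg_def shd \<alpha>_def \<beta>_def by (simp add: image_Un)
  also have "\<dots> = card (sumset \<alpha> \<beta>)" using card_image[OF injh] eq by simp
  also have "\<dots> = N_deg (ap@as) (bp@bs)" unfolding N_deg_def \<alpha>_def \<beta>_def by simp
  finally show ?thesis using part1 by simp
qed

lemma sep_from_sort: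
  fixes v :: "nat list" and Y :: "nat set"
  assumes "distinct v" "1 \<le> i" "i < length v"
    and lt: "sort v ! (i-1) + M < (sort v ! i - 1) + m"
    and Y: "\<forall>y\<in>Y. m \<le> y \<and> y \<le> M"
  shows "\<forall>x\<in>set v. x \<le> sort v ! (i-1) \<or> (\<forall>y\<in>Y. \<forall>y'\<in>Y. sort v ! (i-1) + y' + 1 < x + y)"
proof
  fix x assume "x \<in> set v"
  then have "x \<in> set (sort v)" by simp
  then obtain k where k: "k < length v" "x = sort v ! k" by (metis in_set_conv_nth length_sort)
  have so: "sorted (sort v)" by simp
  show "x \<le> sort v ! (i-1) \<or> (\<forall>y\<in>Y. \<forall>y'\<in>Y. sort v ! (i-1) + y' + 1 < x + y)"
  proof (cases "k \<le> i - 1")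
    case True
    then have "x \<le> sort v ! (i-1)" using k so assms by (simp add: sorted_nth_mono)
    then show ?thesis by simp
  next
    case False
    then have "sort v ! i \<le> x" using k so assms by (simp add: sorted_nth_mono)
    moreover have "\<forall>y\<in>Y. \<forall>y'\<in>Y. sort v ! (i-1) + y' + 1 < sort v ! i + y"
    proof (intro ballI)
      fix y y' assume "y \<in> Y" "y' \<in> Y"
      then have "m \<le> y" "y' \<le> M" "m \<le> M" using Y by auto
      then show "sort v ! (i-1) + y' + 1 < sort v ! i + y" using lt by (cases "sort v ! i") auto
    qed
    ultimately show ?thesis by fastforce
  qed
qed

theorem lemma4:
  fixes K L T :: nat and ap as bp bs :: "nat list"
  assumes tab: "degree_table K L T ap as bp bs"
    and ne_a: "ap @ as \<noteq> []" and ne_b: "bp @ bs \<noteq> []"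
  defines "p \<equiv> sort (ap @ as)" and "q \<equiv> sort (bp @ bs)"
    and "a \<equiv> Min (set (ap @ as))" and "A \<equiv> Max (set (ap @ as))"
    and "b \<equiv> Min (set (bp @ bs))" and "B \<equiv> Max (set (bp @ bs))"
  shows
    "(\<forall>i. 1 \<le> i \<and> i < K + T \<and> p ! (i - 1) + B < (p ! i - 1) + b \<longrightarrow>
        degree_table K L T (shift_down (p ! (i - 1)) ap) (shift_down (p ! (i - 1)) as) bp bs \<and>
        N_deg (shift_down (p ! (i - 1)) (ap @ as)) (bp @ bs) = N_deg (ap @ as) (bp @ bs))
   \<and> (\<forall>i. 1 \<le> i \<and> i < L + T \<and> q ! (i - 1) + A < (q ! i - 1) + a \<longrightarrow>
        degree_table K L T ap as (shift_down (q ! (i - 1)) bp) (shift_down (q ! (i - 1)) bs) \<and>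
        N_deg (ap @ as) (shift_down (q ! (i - 1)) (bp @ bs)) = N_deg (ap @ as) (bp @ bs))"
proof -
  have lens: "length (ap @ as) = K + T" "length (bp @ bs) = L + T"
    "distinct (ap @ as)" "distinct (bp @ bs)"
    using tab unfolding degree_table_def by auto
  have rb: "\<forall>y\<in>set (bp @ bs). b \<le> y \<and> y \<le> B" unfolding b_def B_def by simp
  have ra: "\<forall>y\<in>set (ap @ as). a \<le> y \<and> y \<le> A" unfolding a_def A_def by simp
  have P1: "\<forall>i. 1 \<le> i \<and> i < K + T \<and> p ! (i - 1) + B < (p ! i - 1) + b \<longrightarrow>
        degree_table K L T (shift_down (p ! (i - 1)) ap) (shift_down (p ! (i - 1)) as) bp bs \<and>
        N_deg (shift_down (p ! (i - 1)) (ap @ as)) (bp @ bs) = N_deg (ap @ as) (bp @ bs)"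
  proof (intro allI impI)
    fix i assume i: "1 \<le> i \<and> i < K + T \<and> p ! (i - 1) + B < (p ! i - 1) + b"
    have sep: "\<forall>x\<in>set (ap@as). x \<le> p ! (i-1) \<or> (\<forall>y\<in>set (bp@bs). \<forall>y'\<in>set (bp@bs). p ! (i-1) + y' + 1 < x + y)"
      using sep_from_sort[OF lens(3), of i B b "set (bp @ bs)"] i lens rb unfolding p_def by auto
    show "degree_table K L T (shift_down (p ! (i - 1)) ap) (shift_down (p ! (i - 1)) as) bp bs \<and>
        N_deg (shift_down (p ! (i - 1)) (ap @ as)) (bp @ bs) = N_deg (ap @ as) (bp @ bs)"
      using core[OF tab ne_b sep] .
  qed
  have P2: "\<forall>i. 1 \<le> i \<and> i < L + T \<and> q ! (i - 1) + A < (q ! i - 1) + a \<longrightarrow>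
        degree_table K L T ap as (shift_down (q ! (i - 1)) bp) (shift_down (q ! (i - 1)) bs) \<and>
        N_deg (ap @ as) (shift_down (q ! (i - 1)) (bp @ bs)) = N_deg (ap @ as) (bp @ bs)"
  proof (intro allI impI)
    fix i assume i: "1 \<le> i \<and> i < L + T \<and> q ! (i - 1) + A < (q ! i - 1) + a"
    have sep: "\<forall>x\<in>set (bp@bs). x \<le> q ! (i-1) \<or> (\<forall>y\<in>set (ap@as). \<forall>y'\<in>set (ap@as). q ! (i-1) + y' + 1 < x + y)"
      using sep_from_sort[OF lens(4), of i A a "set (ap @ as)"] i lens ra unfolding q_def by auto
    have r: "degree_table L K T (shift_down (q ! (i - 1)) bp) (shift_down (q ! (i - 1)) bs) ap as \<and>
        N_deg (shift_down (q ! (i - 1)) (bp @ bs)) (ap @ as) = N_deg (bp @ bs) (ap @ as)"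
      using core[OF table_swap[OF tab] ne_a sep] .
    have nc: "N_deg x y = N_deg y x" for x y unfolding N_deg_def by (subst sumset_comm) (rule refl)
    show "degree_table K L T ap as (shift_down (q ! (i - 1)) bp) (shift_down (q ! (i - 1)) bs) \<and>
        N_deg (ap @ as) (shift_down (q ! (i - 1)) (bp @ bs)) = N_deg (ap @ as) (bp @ bs)"
      using table_swap[OF conjunct1[OF r]] conjunct2[OF r]
        nc[of "ap @ as" "shift_down (q ! (i - 1)) (bp @ bs)"] nc[of "ap @ as" "bp @ bs"] by simp
  qed
  show ?thesis using P1 P2 by blast
qed

end
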